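(* Let $M$ be a finite abelian group of order $m$, $J$ a Jacobi function on $M$, and $i\colon\hat{M}\to\hat{M}$ a bijection with $i(x)=x\,i(x^{-1})$ for all $x$, such that $J(\alpha,\beta)=\frac{1}{m}\sum_{x\in\hat{M}}\alpha(i(x))\beta(i(x)x^{-1})$ for all $\alpha,\beta\in M$. Define $x\oplus y=x\,i(x/y)^{-1}$ for $x,y\in\hat{M}$. Then for all $\alpha,\beta,\gamma\in M$, \[ \sum_{\substack{(x\oplus y)\oplus z=1,\\ x,y,z\in\hat{M}}}\alpha(x)\beta(y)\gamma(z)=\sum_{\substack{x\oplus(y\oplus z)=1,\\ x,y,z\in\hat{M}}}\alpha(x)\beta(y)\gamma(z). \]
   Context: $\hat{M}$ is the Pontryagin dual of $M$, written multiplicatively with identity $1$; for $\alpha\in M$, $x\in\hat{M}$, $\alpha(x)$ is the value of the character $x$ at $\alpha$. $\delta(\alpha)=1$ if $\alpha$ is the identity of $M$ and $0$ otherwise. A Jacobi function on $M$ is a function $J\colon M\times M\to\mathbf{C}$ satisfying: (A) $J(\alpha,\beta)=J(\beta,\alpha)$; (B) with $J^*(\alpha,\beta)=-\delta(\alpha)-\delta(\beta)+J(\alpha,\beta)$, $J^*(\alpha,\beta)J^*(\alpha\beta,\gamma)=J^*(\alpha,\beta\gamma)J^*(\beta,\gamma)$; (C) $\sum_{\beta\in M}J(\alpha_1\beta,\alpha_2\beta^{-1})J(\alpha_3\beta,\alpha_4\beta^{-1})=J(\alpha_1\alpha_4,\alpha_2\alpha_3)$; all for all elements of $M$. *)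

theory Defs
  imports Complex_Main "HOL-Algebra.Group"
begin

text \<open>A character is represented as a function on the
  underlying type, with value 1 off the carrier (a normalisation convention).\<close>

definition characters :: "('a, 'b) monoid_scheme \<Rightarrow> ('a \<Rightarrow> complex) set" where
  "characters M = {\<chi>. (\<forall>a\<in>carrier M. \<forall>b\<in>carrier M. \<chi> (a \<otimes>\<^bsub>M\<^esub> b) = \<chi> a * \<chi> b)
                      \<and> (\<forall>a\<in>carrier M. cmod (\<chi> a) = 1)
                      \<and> (\<forall>a. a \<notin> carrier M \<longrightarrow> \<chi> a = 1)}"

definition char_one :: "'a \<Rightarrow> complex" where
  "char_one = (\<lambda>_. 1)"

definition char_mult :: "('a \<Rightarrow> complex) \<Rightarrow> ('a \<Rightarrow> complex) \<Rightarrow> ('a \<Rightarrow> complex)" where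
  "char_mult x y = (\<lambda>a. x a * y a)"

definition char_inv :: "('a \<Rightarrow> complex) \<Rightarrow> ('a \<Rightarrow> complex)" where
  "char_inv x = (\<lambda>a. inverse (x a))"

definition kdelta :: "('a, 'b) monoid_scheme \<Rightarrow> 'a \<Rightarrow> complex" where
  "kdelta M a = (if a = \<one>\<^bsub>M\<^esub> then 1 else 0)"

definition Jstar :: "('a, 'b) monoid_scheme \<Rightarrow> ('a \<Rightarrow> 'a \<Rightarrow> complex) \<Rightarrow> 'a \<Rightarrow> 'a \<Rightarrow> complex" where
  "Jstar M J a b = - kdelta M a - kdelta M b + J a b"

definition jacobi_function :: "('a, 'b) monoid_scheme \<Rightarrow> ('a \<Rightarrow> 'a \<Rightarrow> complex) \<Rightarrow> bool" where
  "jacobi_function M J \<longleftrightarrow>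
     (\<forall>a\<in>carrier M. \<forall>b\<in>carrier M. J a b = J b a)
   \<and> (\<forall>a\<in>carrier M. \<forall>b\<in>carrier M. \<forall>c\<in>carrier M.
        Jstar M J a b * Jstar M J (a \<otimes>\<^bsub>M\<^esub> b) c = Jstar M J a (b \<otimes>\<^bsub>M\<^esub> c) * Jstar M J b c)
   \<and> (\<forall>a1\<in>carrier M. \<forall>a2\<in>carrier M. \<forall>a3\<in>carrier M. \<forall>a4\<in>carrier M.
        (\<Sum>b\<in>carrier M. J (a1 \<otimes>\<^bsub>M\<^esub> b) (a2 \<otimes>\<^bsub>M\<^esub> inv\<^bsub>M\<^esub> b)
                        * J (a3 \<otimes>\<^bsub>M\<^esub> b) (a4 \<otimes>\<^bsub>M\<^esub> inv\<^bsub>M\<^esub> b))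
        = J (a1 \<otimes>\<^bsub>M\<^esub> a4) (a2 \<otimes>\<^bsub>M\<^esub> a3))"

definition char_oplus :: "(('a \<Rightarrow> complex) \<Rightarrow> ('a \<Rightarrow> complex)) \<Rightarrow> ('a \<Rightarrow> complex) \<Rightarrow> ('a \<Rightarrow> complex) \<Rightarrow> ('a \<Rightarrow> complex)" where
  "char_oplus i x y = char_mult x (char_inv (i (char_mult x (char_inv y))))"

end

theory Submission
  imports Defs "HOL-Algebra.Multiplicative_Group" "HOL-Library.FuncSet"
begin


lemma char_nz: "x \<in> characters M \<Longrightarrow> x a \<noteq> 0"
  unfolding characters_def by (cases "a \<in> carrier M") fastforce+

lemma char_hom: "x \<in> characters M \<Longrightarrow> a \<in> carrier M \<Longrightarrow> b \<in> carrier M \<Longrightarrow> x (a \<otimes>\<^bsub>M\<^esub> b) = x a * x b"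
  unfolding characters_def by blast

lemma char_one_val: assumes "group M" "x \<in> characters M" shows "x \<one>\<^bsub>M\<^esub> = 1"
proof -
  have mon: "monoid M" using group.is_monoid assms(1) by blast
  have one: "\<one>\<^bsub>M\<^esub> \<in> carrier M" by (rule monoid.one_closed[OF mon])
  have "x (\<one>\<^bsub>M\<^esub> \<otimes>\<^bsub>M\<^esub> \<one>\<^bsub>M\<^esub>) = x \<one>\<^bsub>M\<^esub> * x \<one>\<^bsub>M\<^esub>"
    by (rule char_hom[OF assms(2) one one])
  then have "x \<one>\<^bsub>M\<^esub> * 1 = x \<one>\<^bsub>M\<^esub> * x \<one>\<^bsub>M\<^esub>" using monoid.l_one[OF mon one] by simp
  then have "x \<one>\<^bsub>M\<^esub> * (x \<one>\<^bsub>M\<^esub> - 1) = 0" by (simp add: algebra_simps)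
  then show ?thesis using char_nz[OF assms(2), of "\<one>\<^bsub>M\<^esub>"] by simp
qed


lemma char_off: "x \<in> characters M \<Longrightarrow> a \<notin> carrier M \<Longrightarrow> x a = 1"
  unfolding characters_def by blast

lemma char_norm: "x \<in> characters M \<Longrightarrow> a \<in> carrier M \<Longrightarrow> cmod (x a) = 1"
  unfolding characters_def by blast

lemma char_inv_val: assumes "group M" "x \<in> characters M" "a \<in> carrier M"
  shows "x (inv\<^bsub>M\<^esub> a) = inverse (x a)"
proof -
  have "x (a \<otimes>\<^bsub>M\<^esub> inv\<^bsub>M\<^esub> a) = x a * x (inv\<^bsub>M\<^esub> a)"
    using assms by (simp add: char_hom group.inv_closed)
  then have "x a * x (inv\<^bsub>M\<^esub> a) = 1" using assms char_one_val by (metis group.r_inv)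
  then show ?thesis by (metis inverse_unique)
qed

lemma char_one_in: "char_one \<in> characters M"
  unfolding characters_def char_one_def by simp

lemma char_mult_in: "x \<in> characters M \<Longrightarrow> y \<in> characters M \<Longrightarrow> char_mult x y \<in> characters M"
  unfolding characters_def char_mult_def by (auto simp: norm_mult)

lemma char_inv_in: "x \<in> characters M \<Longrightarrow> char_inv x \<in> characters M"
  unfolding characters_def char_inv_def by (auto simp: norm_inverse)

lemma cm_assoc: "char_mult (char_mult x y) z = char_mult x (char_mult y z)"
  unfolding char_mult_def by (simp add: mult.assoc)
lemma cm_comm: "char_mult x y = char_mult y x"
  unfolding char_mult_def by (simp add: mult.commute)
lemma cm_lcomm: "char_mult x (char_mult y z) = char_mult y (char_mult x z)"
  unfolding char_mult_def by (simp add: mult.left_commute)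
lemma cm_one: "char_mult x char_one = x" "char_mult char_one x = x"
  unfolding char_mult_def char_one_def by simp_all
lemma ci_mult: "char_inv (char_mult x y) = char_mult (char_inv x) (char_inv y)"
  unfolding char_mult_def char_inv_def by simp
lemma ci_ci: "char_inv (char_inv x) = x"
  unfolding char_inv_def by simp
lemma ci_one: "char_inv char_one = char_one"
  unfolding char_inv_def char_one_def by simp
lemma cm_inv: "x \<in> characters M \<Longrightarrow> char_mult x (char_inv x) = char_one"
  unfolding char_mult_def char_inv_def char_one_def using char_nz by fastforce
lemma cm_inv2: "x \<in> characters M \<Longrightarrow> char_mult (char_inv x) x = char_one"
  using cm_inv cm_comm by metis
lemma cm_inv3: "x \<in> characters M \<Longrightarrow> char_mult x (char_mult (char_inv x) y) = y"
  by (metis cm_assoc cm_inv cm_one(2))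
lemma cm_inv4: "x \<in> characters M \<Longrightarrow> char_mult (char_inv x) (char_mult x y) = y"
  by (metis cm_assoc cm_inv2 cm_one(2))

lemma finite_chars: assumes "group M" "finite (carrier M)" shows "finite (characters M)"
proof -
  let ?n = "order M"
  have n: "?n \<ge> 1" using assms unfolding order_def
    by (metis One_nat_def Suc_leI card_gt_0_iff empty_iff group.is_monoid monoid.one_closed)
  let ?T = "\<Pi>\<^sub>E a\<in>carrier M. {z::complex. z ^ ?n = 1}"
  have fT: "finite ?T" by (intro finite_PiE assms(2) finite_roots_unity n)
  have inj: "inj_on (\<lambda>x. restrict x (carrier M)) (characters M)"
  proof (rule inj_onI)
    fix x y assume xy: "x \<in> characters M" "y \<in> characters M" "restrict x (carrier M) = restrict y (carrier M)"
    show "x = y"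
    proof
      fix a show "x a = y a"
      proof (cases "a \<in> carrier M")
        case True
        then show ?thesis using fun_cong[OF xy(3), of a] by simp
      next
        case False
        then show ?thesis using xy char_off[of x M a] char_off[of y M a] by simp
      qed
    qed
  qed
  have pw: "x a ^ ?n = 1" if x: "x \<in> characters M" and a: "a \<in> carrier M" for x a
  proof -
    have mon: "monoid M" using group.is_monoid assms(1) by blast
    have "x (a [^]\<^bsub>M\<^esub> (k::nat)) = x a ^ k" for k
    proof (induction k)
      case 0
      then show ?case using char_one_val[OF assms(1) x] monoid.nat_pow_0[OF mon, of a] by simp
    next
      case (Suc k)
      have "x (a [^]\<^bsub>M\<^esub> Suc k) = x (a [^]\<^bsub>M\<^esub> k \<otimes>\<^bsub>M\<^esub> a)"
        using monoid.nat_pow_Suc[OF mon, of a k] by simp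
      also have "\<dots> = x (a [^]\<^bsub>M\<^esub> k) * x a"
        by (rule char_hom[OF x monoid.nat_pow_closed[OF mon a] a])
      finally show ?case using Suc by simp
    qed
    from this[of ?n] show ?thesis
      using group.pow_order_eq_1[OF assms(1) a] char_one_val[OF assms(1) x] a by simp
  qed
  have sub: "(\<lambda>x. restrict x (carrier M)) ` characters M \<subseteq> ?T"
    using pw by (auto simp: PiE_iff)
  show ?thesis using finite_subset[OF sub fT] inj finite_image_iff by blast
qed




lemma bij_cm: "t \<in> characters M \<Longrightarrow> bij_betw (char_mult t) (characters M) (characters M)"
  by (rule bij_betw_byWitness[where f'="char_mult (char_inv t)"])
     (auto simp: cm_inv3 cm_inv4 char_mult_in char_inv_in)

lemma bij_ci: "bij_betw char_inv (characters M) (characters M)"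
  by (rule bij_betw_byWitness[where f'="char_inv"]) (auto simp: ci_ci char_inv_in)

lemma s_shift: assumes "t \<in> characters M"
  shows "(\<Sum>w\<in>characters M. w b) = t b * (\<Sum>w\<in>characters M. w b)"
proof -
  have "(\<Sum>w\<in>characters M. w b) = (\<Sum>w\<in>characters M. char_mult t w b)"
    using sum.reindex_bij_betw[OF bij_cm[OF assms], of "\<lambda>w. w b"] by simp
  also have "\<dots> = t b * (\<Sum>w\<in>characters M. w b)"
    by (simp add: char_mult_def sum_distrib_left)
  finally show ?thesis .
qed

lemma s_vals: assumes "(\<Sum>w\<in>characters M. w b) \<noteq> 0"
  shows "(\<Sum>w\<in>characters M. w b) = of_nat (card (characters M))"
proof -
  have t1: "\<And>t. t \<in> characters M \<Longrightarrow> t b = 1" using s_shift assms by (metis mult_cancel_right1)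
  have "(\<Sum>w\<in>characters M. w b) = (\<Sum>w\<in>characters M. 1)" by (rule sum.cong[OF refl]) (rule t1)
  then show ?thesis by simp
qed

locale jac =
  fixes M :: "('a, 'b) monoid_scheme"
    and J :: "'a \<Rightarrow> 'a \<Rightarrow> complex"
    and i :: "('a \<Rightarrow> complex) \<Rightarrow> ('a \<Rightarrow> complex)"
    and m :: nat
  assumes cg: "comm_group M"
    and fin: "finite (carrier M)"
    and m_def: "m = card (carrier M)"
    and jac: "jacobi_function M J"
    and ibij: "bij_betw i (characters M) (characters M)"
    and ih: "\<forall>x\<in>characters M. i x = char_mult x (i (char_inv x))"
    and Jf: "\<forall>a\<in>carrier M. \<forall>b\<in>carrier M.
           J a b = (1 / of_nat m) * (\<Sum>x\<in>characters M. i x a * char_mult (i x) (char_inv x) b)"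
begin

abbreviation "X \<equiv> characters M"
definition "s b = (\<Sum>w\<in>X. w b)"

lemma grp: "group M" using cg comm_group.axioms(2) by blast
lemma finX: "finite X" using finite_chars[OF grp fin] .
lemma mpos: "m > 0" using m_def fin grp
  by (metis card_gt_0_iff empty_iff group.is_monoid monoid.one_closed)
lemma i_in: "x \<in> X \<Longrightarrow> i x \<in> X" using ibij bij_betwE by blast

lemma ii: assumes "u \<in> X" shows "char_mult (i u) (char_inv u) = i (char_inv u)"
proof -
  have "i (char_inv u) = char_mult (char_inv u) (i u)"
    using ih char_inv_in[OF assms] ci_ci by metis
  then show ?thesis by (simp add: cm_comm)
qed

lemma bij_ii: "bij_betw (\<lambda>u. i (char_inv u)) X X"
  using bij_betw_trans[OF bij_ci ibij] by (simp add: comp_def)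

lemma J_one: assumes "b \<in> carrier M" shows "J \<one>\<^bsub>M\<^esub> b = s b / of_nat m"
proof -
  have "J \<one>\<^bsub>M\<^esub> b = (1 / of_nat m) * (\<Sum>x\<in>X. i x \<one>\<^bsub>M\<^esub> * char_mult (i x) (char_inv x) b)"
    using Jf assms grp by (simp add: group.is_monoid monoid.one_closed)
  also have "(\<Sum>x\<in>X. i x \<one>\<^bsub>M\<^esub> * char_mult (i x) (char_inv x) b) = (\<Sum>x\<in>X. i (char_inv x) b)"
    by (rule sum.cong) (auto simp: char_one_val[OF grp] i_in ii)
  also have "\<dots> = s b" unfolding s_def using sum.reindex_bij_betw[OF bij_ii, of "\<lambda>w. w b"] by simp
  finally show ?thesis by simp
qed

lemma J_inv: assumes "b \<in> carrier M" shows "J b (inv\<^bsub>M\<^esub> b) = s b / of_nat m"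
proof -
  have ib: "inv\<^bsub>M\<^esub> b \<in> carrier M" by (rule group.inv_closed[OF grp assms])
  have "J b (inv\<^bsub>M\<^esub> b) = (1 / of_nat m) * (\<Sum>x\<in>X. i x b * char_mult (i x) (char_inv x) (inv\<^bsub>M\<^esub> b))"
    using Jf assms ib by blast
  also have "(\<Sum>x\<in>X. i x b * char_mult (i x) (char_inv x) (inv\<^bsub>M\<^esub> b)) = (\<Sum>x\<in>X. x b)"
  proof (rule sum.cong)
    fix x assume x: "x \<in> X"
    have "i x b \<noteq> 0" "x b \<noteq> 0" using char_nz[OF i_in[OF x]] char_nz[OF x] by auto
    then show "i x b * char_mult (i x) (char_inv x) (inv\<^bsub>M\<^esub> b) = x b"
      by (simp add: char_mult_def char_inv_def char_inv_val[OF grp i_in[OF x] assms] char_inv_val[OF grp x assms] field_simps)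
  qed simp
  finally show ?thesis by (simp add: s_def)
qed

lemma s_one: "s \<one>\<^bsub>M\<^esub> = of_nat (card X)"
  unfolding s_def by (simp add: char_one_val[OF grp])

lemma s_cases: "s b = 0 \<or> s b = of_nat (card X)"
  unfolding s_def using s_vals[where M=M and b=b] by blast

lemma Jsym: "a \<in> carrier M \<Longrightarrow> b \<in> carrier M \<Longrightarrow> J a b = J b a"
  using jac unfolding jacobi_function_def by blast

lemma cocyc: "a \<in> carrier M \<Longrightarrow> b \<in> carrier M \<Longrightarrow> c \<in> carrier M \<Longrightarrow>
   Jstar M J a b * Jstar M J (a \<otimes>\<^bsub>M\<^esub> b) c = Jstar M J a (b \<otimes>\<^bsub>M\<^esub> c) * Jstar M J b c"
  using jac unfolding jacobi_function_def by blast

lemma card_X: "card X = m \<and> (\<forall>g\<in>carrier M. g \<noteq> \<one>\<^bsub>M\<^esub> \<longrightarrow> s g = 0)"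
proof (cases "\<exists>g\<in>carrier M. g \<noteq> \<one>\<^bsub>M\<^esub>")
  case True
  have one: "\<one>\<^bsub>M\<^esub> \<in> carrier M" using grp by (simp add: group.is_monoid monoid.one_closed)
  have oo: "\<one>\<^bsub>M\<^esub> \<otimes>\<^bsub>M\<^esub> g = g" if "g \<in> carrier M" for g
    using grp that by (simp add: group.is_monoid monoid.l_one)
  define c where "c = of_nat (card X) / (of_nat m :: complex)"
  have mnz: "(of_nat m :: complex) \<noteq> 0" using mpos by simp
  have Jst1: "Jstar M J \<one>\<^bsub>M\<^esub> g = -1 - kdelta M g + s g / of_nat m" if "g \<in> carrier M" for g
    unfolding Jstar_def using J_one[OF that] by (simp add: kdelta_def)
  from True obtain g where g: "g \<in> carrier M" "g \<noteq> \<one>\<^bsub>M\<^esub>" by blast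
  have B1: "Jstar M J \<one>\<^bsub>M\<^esub> \<one>\<^bsub>M\<^esub> * Jstar M J \<one>\<^bsub>M\<^esub> g = Jstar M J \<one>\<^bsub>M\<^esub> g * Jstar M J \<one>\<^bsub>M\<^esub> g"
    using cocyc[OF one one g(1)] oo[OF one] oo[OF g(1)] by simp
  have c1: "c = 1"
  proof (cases "s g = 0")
    case True
    then show ?thesis using B1 Jst1[OF one] Jst1[OF g(1)] g s_one
      by (simp add: kdelta_def c_def)
  next
    case False
    then have "s g = of_nat (card X)" using s_cases by blast
    then have "(c - 2) * (c - 1) = (c - 1) * (c - 1)"
      using B1 Jst1[OF one] Jst1[OF g(1)] g s_one by (simp add: kdelta_def c_def)
    then have "(c - 1) * ((c - 2) - (c - 1)) = 0" by (simp add: algebra_simps)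
    then show ?thesis by simp
  qed
  then have cardX: "card X = m" using mnz unfolding c_def by (simp add: divide_eq_1_iff)
  have "s h = 0" if h: "h \<in> carrier M" "h \<noteq> \<one>\<^bsub>M\<^esub>" for h
  proof (rule ccontr)
    assume "s h \<noteq> 0"
    then have sh: "s h = of_nat m" using s_cases cardX by metis
    have hi: "inv\<^bsub>M\<^esub> h \<in> carrier M" "inv\<^bsub>M\<^esub> h \<noteq> \<one>\<^bsub>M\<^esub>" "h \<otimes>\<^bsub>M\<^esub> inv\<^bsub>M\<^esub> h = \<one>\<^bsub>M\<^esub>"
      using h grp by (auto simp: group.inv_closed group.r_inv) (metis group.inv_eq_1_iff)
    have "Jstar M J \<one>\<^bsub>M\<^esub> h * Jstar M J (\<one>\<^bsub>M\<^esub> \<otimes>\<^bsub>M\<^esub> h) (inv\<^bsub>M\<^esub> h)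
        = Jstar M J \<one>\<^bsub>M\<^esub> (h \<otimes>\<^bsub>M\<^esub> inv\<^bsub>M\<^esub> h) * Jstar M J h (inv\<^bsub>M\<^esub> h)"
      using cocyc[OF one h(1) hi(1)] .
    moreover have "Jstar M J \<one>\<^bsub>M\<^esub> h = 0" using Jst1[OF h(1)] sh h mnz by (simp add: kdelta_def)
    moreover have "Jstar M J \<one>\<^bsub>M\<^esub> \<one>\<^bsub>M\<^esub> = -1" using Jst1[OF one] s_one cardX mnz by (simp add: kdelta_def)
    moreover have "Jstar M J h (inv\<^bsub>M\<^esub> h) = 1" unfolding Jstar_def
      using J_inv[OF h(1)] sh h hi mnz by (simp add: kdelta_def)
    ultimately show False using hi by simp
  qed
  then show ?thesis using cardX by blast
next
  case False
  have one: "\<one>\<^bsub>M\<^esub> \<in> carrier M" using grp by (simp add: group.is_monoid monoid.one_closed)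
  then have car: "carrier M = {\<one>\<^bsub>M\<^esub>}" using False by blast
  have "X = {char_one}"
  proof safe
    fix x assume x: "x \<in> X"
    show "x = char_one"
    proof
      fix a show "x a = char_one a"
        using char_off[OF x] char_one_val[OF grp x] car unfolding char_one_def
        by (cases "a \<in> carrier M") auto
    qed
  qed (rule char_one_in)
  then have "card X = m" using m_def car by simp
  moreover have "\<forall>g\<in>carrier M. g \<noteq> \<one>\<^bsub>M\<^esub> \<longrightarrow> s g = 0" using car by blast
  ultimately show ?thesis by blast
qed

lemma J_one': "b \<in> carrier M \<Longrightarrow> J \<one>\<^bsub>M\<^esub> b = kdelta M b"
  using J_one card_X s_one mpos by (auto simp: kdelta_def)
lemma J_one'': "b \<in> carrier M \<Longrightarrow> J b \<one>\<^bsub>M\<^esub> = kdelta M b"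
  using J_one' Jsym grp by (metis group.is_monoid monoid.one_closed)
lemma J_inv': "b \<in> carrier M \<Longrightarrow> J b (inv\<^bsub>M\<^esub> b) = kdelta M b"
  using J_inv card_X s_one mpos by (auto simp: kdelta_def)

end



context jac begin

lemma core:
  assumes a: "a \<in> carrier M" and b: "b \<in> carrier M" and c: "c \<in> carrier M"
  shows "J a b * J (a \<otimes>\<^bsub>M\<^esub> b) c = J a (b \<otimes>\<^bsub>M\<^esub> c) * J b c"
proof -
  have G: "group M" by (rule grp)
  note one = monoid.one_closed[OF group.is_monoid[OF G]]
  have ab: "a \<otimes>\<^bsub>M\<^esub> b \<in> carrier M" "b \<otimes>\<^bsub>M\<^esub> c \<in> carrier M"
    using a b c G by (simp_all add: group.is_monoid monoid.m_closed)
  have invr: "y = inv\<^bsub>M\<^esub> x" if "x \<otimes>\<^bsub>M\<^esub> y = \<one>\<^bsub>M\<^esub>" "x \<in> carrier M" "y \<in> carrier M" for x y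
    using that G by (metis group.inv_equality group.inv_inv)
  have lo: "\<one>\<^bsub>M\<^esub> \<otimes>\<^bsub>M\<^esub> x = x" "x \<otimes>\<^bsub>M\<^esub> \<one>\<^bsub>M\<^esub> = x" if "x \<in> carrier M" for x
    using that G by (simp_all add: group.is_monoid monoid.l_one monoid.r_one)
  have kd: "kdelta M x = (if x = \<one>\<^bsub>M\<^esub> then 1 else 0)" for x by (simp add: kdelta_def)
  show ?thesis
  proof (cases "a = \<one>\<^bsub>M\<^esub>")
    case True
    have e: "J a b = kdelta M b" "J (a \<otimes>\<^bsub>M\<^esub> b) c = J b c" "J a (b \<otimes>\<^bsub>M\<^esub> c) = kdelta M (b \<otimes>\<^bsub>M\<^esub> c)"
      using True J_one' b ab lo b by auto
    show ?thesis
    proof (cases "b = \<one>\<^bsub>M\<^esub>")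
      case True
      then show ?thesis using e J_one'[OF c] lo c by (simp add: kd)
    next
      case False
      show ?thesis
      proof (cases "b \<otimes>\<^bsub>M\<^esub> c = \<one>\<^bsub>M\<^esub>")
        case True
        then have "c = inv\<^bsub>M\<^esub> b" using invr b c by blast
        then show ?thesis using e J_inv'[OF b] False by (simp add: kd)
      next
        case False
        then show ?thesis using e \<open>b \<noteq> _\<close> by (simp add: kd)
      qed
    qed
  next
    case anot: False
    show ?thesis
    proof (cases "c = \<one>\<^bsub>M\<^esub>")
      case True
      have e: "J (a \<otimes>\<^bsub>M\<^esub> b) c = kdelta M (a \<otimes>\<^bsub>M\<^esub> b)" "J a (b \<otimes>\<^bsub>M\<^esub> c) = J a b" "J b c = kdelta M b"
        using True J_one'' ab lo b by auto
      show ?thesis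
      proof (cases "a \<otimes>\<^bsub>M\<^esub> b = \<one>\<^bsub>M\<^esub>")
        case True
        then have "b = inv\<^bsub>M\<^esub> a" using invr a b by blast
        then show ?thesis using e J_inv'[OF a] anot by (simp add: kd)
      next
        case False
        show ?thesis
        proof (cases "b = \<one>\<^bsub>M\<^esub>")
          case True
          then show ?thesis using e J_one''[OF a] anot by (simp add: kd)
        next
          case False
          then show ?thesis using e \<open>a \<otimes>\<^bsub>M\<^esub> b \<noteq> _\<close> by (simp add: kd)
        qed
      qed
    next
      case cnot: False
      show ?thesis
      proof (cases "b = \<one>\<^bsub>M\<^esub>")
        case True
        then show ?thesis using J_one''[OF a] J_one'[OF c] lo a c anot cnot by (simp add: kd)
      next
        case bnot: False
        have B: "Jstar M J a b * Jstar M J (a \<otimes>\<^bsub>M\<^esub> b) c = Jstar M J a (b \<otimes>\<^bsub>M\<^esub> c) * Jstar M J b c"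
          using cocyc[OF a b c] .
        show ?thesis
        proof (cases "a \<otimes>\<^bsub>M\<^esub> b = \<one>\<^bsub>M\<^esub>")
          case abT: True
          then have bi: "b = inv\<^bsub>M\<^esub> a" using invr a b by blast
          show ?thesis
          proof (cases "b \<otimes>\<^bsub>M\<^esub> c = \<one>\<^bsub>M\<^esub>")
            case True
            then show ?thesis using abT J_inv'[OF a] J_one''[OF a] bi anot lo a by (simp add: kd)
          next
            case False
            then show ?thesis using B abT J_inv'[OF a] bi anot bnot cnot by (simp add: kd Jstar_def)
          qed
        next
          case abF: False
          show ?thesis
          proof (cases "b \<otimes>\<^bsub>M\<^esub> c = \<one>\<^bsub>M\<^esub>")
            case True
            then have ci: "c = inv\<^bsub>M\<^esub> b" using invr b c by blast
            then show ?thesis using B True J_inv'[OF b] J_one''[OF a] abF anot bnot cnot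
              by (simp add: kd Jstar_def)
          next
            case False
            then show ?thesis using B abF anot bnot cnot by (simp add: kd Jstar_def)
          qed
        qed
      qed
    qed
  qed
qed

end



lemma H1: assumes "w \<in> characters M" shows "char_mult w (char_inv (char_mult w (char_inv t))) = t"
  unfolding fun_eq_iff char_mult_def char_inv_def using char_nz[OF assms] by simp
lemma H2: assumes "v \<in> characters M" shows "char_mult (char_mult w v) (char_inv v) = w"
  unfolding fun_eq_iff char_mult_def char_inv_def using char_nz[OF assms] by simp
lemma H3: "v \<in> characters M \<Longrightarrow> char_mult w (char_inv v) = char_one \<Longrightarrow> w = v"
  by (metis H2 cm_comm cm_inv3 cm_one(2))
lemma H4: assumes "v \<in> characters M" shows "char_mult (char_mult w (char_inv v)) v = w"
  unfolding fun_eq_iff char_mult_def char_inv_def using char_nz[OF assms] by simp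

context jac begin

abbreviation "op \<equiv> char_oplus i"

definition "phiL = (\<lambda>(t,u). (char_mult (i u) (i t), char_mult (char_mult (i u) (i t)) (char_inv t),
                              char_mult (i u) (char_inv u)))"
definition "psiL = (\<lambda>(x,y,z). (char_mult x (char_inv y), char_mult (op x y) (char_inv z)))"

lemma inX: "x \<in> X \<Longrightarrow> y \<in> X \<Longrightarrow> char_mult x y \<in> X" "x \<in> X \<Longrightarrow> char_inv x \<in> X"
  "x \<in> X \<Longrightarrow> i x \<in> X"
  by (auto simp: char_mult_in char_inv_in i_in)

lemma op_in: "x \<in> X \<Longrightarrow> y \<in> X \<Longrightarrow> op x y \<in> X"
  unfolding char_oplus_def by (simp add: inX)

lemma bijL: "bij_betw phiL (X \<times> X)
   {(x, y, z). x \<in> X \<and> y \<in> X \<and> z \<in> X \<and> op (op x y) z = char_one}"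
proof (rule bij_betw_byWitness[where f'=psiL])
  show "\<forall>p\<in>X \<times> X. psiL (phiL p) = p"
  proof safe
    fix t u assume tu: "t \<in> X" "u \<in> X"
    have e1: "char_mult (char_mult (i u) (i t)) (char_inv (char_mult (char_mult (i u) (i t)) (char_inv t))) = t"
      by (rule H1[where M=M]) (intro inX tu)
    have e2: "op (char_mult (i u) (i t)) (char_mult (char_mult (i u) (i t)) (char_inv t)) = i u"
      unfolding char_oplus_def e1 by (rule H2[where M=M]) (intro inX tu)
    have e3: "char_mult (i u) (char_inv (char_mult (i u) (char_inv u))) = u"
      by (rule H1[where M=M]) (intro inX tu)
    show "psiL (phiL (t, u)) = (t, u)" unfolding phiL_def psiL_def using e1 e2 e3 by simp
  qed
  show "\<forall>p\<in>{(x, y, z). x \<in> X \<and> y \<in> X \<and> z \<in> X \<and> op (op x y) z = char_one}. phiL (psiL p) = p"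
  proof safe
    fix x y z assume xyz: "x \<in> X" "y \<in> X" "z \<in> X" and eq: "op (op x y) z = char_one"
    define t where "t = char_mult x (char_inv y)"
    define w where "w = op x y"
    define u where "u = char_mult w (char_inv z)"
    have tX1: "t \<in> X" unfolding t_def by (intro inX xyz)
    have tX2: "w \<in> X" unfolding w_def by (rule op_in[OF xyz(1,2)])
    have tX3: "u \<in> X" unfolding u_def by (intro inX tX2 xyz)
    note tX = tX1 tX2 tX3
    have w: "w = char_mult x (char_inv (i t))" unfolding w_def t_def char_oplus_def ..
    have eq': "char_mult w (char_inv (i u)) = char_one"
      using eq unfolding w_def[symmetric] unfolding char_oplus_def u_def .
    have iu: "i u = w" using H3[where M=M, OF i_in[OF tX(3)] eq'] by simp
    have 1: "char_mult (i u) (i t) = x" unfolding iu w by (rule H4[where M=M]) (intro inX tX)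
    have 2: "char_mult x (char_inv t) = y" unfolding t_def by (rule H1[OF xyz(1)])
    have 3: "char_mult (i u) (char_inv u) = z" unfolding iu unfolding u_def by (rule H1[OF tX(2)])
    show "phiL (psiL (x, y, z)) = (x, y, z)"
      unfolding psiL_def phiL_def using 1 2 3 by (simp add: t_def[symmetric] w_def[symmetric] u_def[symmetric])
  qed
  show "phiL ` (X \<times> X) \<subseteq> {(x, y, z). x \<in> X \<and> y \<in> X \<and> z \<in> X \<and> op (op x y) z = char_one}"
  proof (rule image_subsetI)
    fix p assume "p \<in> X \<times> X"
    then obtain t u where p: "p = (t, u)" and tu: "t \<in> X" "u \<in> X" by blast
    have e1: "char_mult (char_mult (i u) (i t)) (char_inv (char_mult (char_mult (i u) (i t)) (char_inv t))) = t"
      by (rule H1[where M=M]) (intro inX tu)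
    have e2: "op (char_mult (i u) (i t)) (char_mult (char_mult (i u) (i t)) (char_inv t)) = i u"
      unfolding char_oplus_def e1 by (rule H2[where M=M]) (intro inX tu)
    have e3: "char_mult (i u) (char_inv (char_mult (i u) (char_inv u))) = u"
      by (rule H1[where M=M]) (intro inX tu)
    have e4: "op (i u) (char_mult (i u) (char_inv u)) = char_one"
      unfolding char_oplus_def e3 by (rule cm_inv[where M=M]) (intro inX tu)
    have m1: "char_mult (i u) (i t) \<in> X" by (intro inX tu)
    have m2: "char_mult (char_mult (i u) (i t)) (char_inv t) \<in> X" by (intro inX tu)
    have m3: "char_mult (i u) (char_inv u) \<in> X" by (intro inX tu)
    show "phiL p \<in> {(x, y, z). x \<in> X \<and> y \<in> X \<and> z \<in> X \<and> op (op x y) z = char_one}"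
      unfolding p phiL_def using m1 m2 m3 e2 e4 by simp
  qed
  show "psiL ` {(x, y, z). x \<in> X \<and> y \<in> X \<and> z \<in> X \<and> op (op x y) z = char_one} \<subseteq> X \<times> X"
    unfolding psiL_def by (auto intro!: inX op_in)
qed

end



context jac begin

definition "phiR = (\<lambda>(t,u). (i u, char_mult (char_mult (i u) (char_inv u)) (i t),
                   char_mult (char_mult (char_mult (i u) (char_inv u)) (i t)) (char_inv t)))"
definition "psiR = (\<lambda>(x,y,z). (char_mult y (char_inv z), char_mult x (char_inv (op y z))))"

lemma bijR: "bij_betw phiR (X \<times> X)
   {(x, y, z). x \<in> X \<and> y \<in> X \<and> z \<in> X \<and> op x (op y z) = char_one}"
proof (rule bij_betw_byWitness[where f'=psiR])
  have common: "char_mult y (char_inv (char_mult y (char_inv t))) = t \<and>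
      op y (char_mult y (char_inv t)) = w \<and>
      op (i u) w = char_one \<and> char_mult (i u) (char_inv w) = u"
    if tu: "t \<in> X" "u \<in> X" and w: "w = char_mult (i u) (char_inv u)" and y: "y = char_mult w (i t)" for t u w y
  proof -
    have wX: "w \<in> X" unfolding w by (intro inX tu)
    have yX: "y \<in> X" unfolding y by (intro inX tu wX)
    have e1: "char_mult y (char_inv (char_mult y (char_inv t))) = t" by (rule H1[OF yX])
    have e2: "op y (char_mult y (char_inv t)) = w"
      unfolding char_oplus_def e1 unfolding y by (rule H2[where M=M]) (intro inX tu)
    have e3: "char_mult (i u) (char_inv w) = u" unfolding w by (rule H1[where M=M]) (intro inX tu)
    have e4: "op (i u) w = char_one"
      unfolding char_oplus_def e3 by (rule cm_inv[where M=M]) (intro inX tu)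
    show ?thesis using e1 e2 e3 e4 by blast
  qed
  show "\<forall>p\<in>X \<times> X. psiR (phiR p) = p"
  proof safe
    fix t u assume tu: "t \<in> X" "u \<in> X"
    note c = common[OF tu refl refl]
    show "psiR (phiR (t, u)) = (t, u)" unfolding phiR_def psiR_def using c by simp
  qed
  show "phiR ` (X \<times> X) \<subseteq> {(x, y, z). x \<in> X \<and> y \<in> X \<and> z \<in> X \<and> op x (op y z) = char_one}"
  proof (rule image_subsetI)
    fix p assume "p \<in> X \<times> X"
    then obtain t u where p: "p = (t, u)" and tu: "t \<in> X" "u \<in> X" by blast
    note c = common[OF tu refl refl]
    have m1: "i u \<in> X" by (intro inX tu)
    have m2: "char_mult (char_mult (i u) (char_inv u)) (i t) \<in> X" by (intro inX tu)
    have m3: "char_mult (char_mult (char_mult (i u) (char_inv u)) (i t)) (char_inv t) \<in> X" by (intro inX tu)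
    show "phiR p \<in> {(x, y, z). x \<in> X \<and> y \<in> X \<and> z \<in> X \<and> op x (op y z) = char_one}"
      unfolding p phiR_def using m1 m2 m3 c by simp
  qed
  show "\<forall>p\<in>{(x, y, z). x \<in> X \<and> y \<in> X \<and> z \<in> X \<and> op x (op y z) = char_one}. phiR (psiR p) = p"
  proof safe
    fix x y z assume xyz: "x \<in> X" "y \<in> X" "z \<in> X" and eq: "op x (op y z) = char_one"
    define t where "t = char_mult y (char_inv z)"
    define w where "w = op y z"
    define u where "u = char_mult x (char_inv w)"
    have tX1: "t \<in> X" unfolding t_def by (intro inX xyz)
    have tX2: "w \<in> X" unfolding w_def by (rule op_in[OF xyz(2,3)])
    have tX3: "u \<in> X" unfolding u_def by (intro inX tX2 xyz)
    have w: "w = char_mult y (char_inv (i t))" unfolding w_def t_def char_oplus_def ..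
    have eq': "char_mult x (char_inv (i u)) = char_one"
      using eq unfolding w_def[symmetric] unfolding char_oplus_def u_def .
    have iu: "i u = x" using H3[where M=M, OF i_in[OF tX3] eq'] by simp
    have 1: "char_mult (i u) (char_inv u) = w" unfolding iu unfolding u_def by (rule H1[OF xyz(1)])
    have 2: "char_mult w (i t) = y" unfolding w by (rule H4[where M=M]) (intro inX tX1)
    have 3: "char_mult y (char_inv t) = z" unfolding t_def by (rule H1[OF xyz(2)])
    show "phiR (psiR (x, y, z)) = (x, y, z)"
      unfolding psiR_def phiR_def using 1 2 3 iu
      by (simp add: t_def[symmetric] w_def[symmetric] u_def[symmetric])
  qed
  show "psiR ` {(x, y, z). x \<in> X \<and> y \<in> X \<and> z \<in> X \<and> op x (op y z) = char_one} \<subseteq> X \<times> X"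
    unfolding psiR_def by (auto intro!: inX op_in)
qed

lemma Ksum: "a \<in> carrier M \<Longrightarrow> b \<in> carrier M \<Longrightarrow>
   (\<Sum>x\<in>X. i x a * char_mult (i x) (char_inv x) b) = of_nat m * J a b"
  using Jf mpos by simp

lemma final:
  assumes a: "a \<in> carrier M" and b: "b \<in> carrier M" and c: "c \<in> carrier M"
  shows "(\<Sum>(x, y, z)\<in>{(x, y, z). x \<in> X \<and> y \<in> X \<and> z \<in> X
              \<and> op (op x y) z = char_one}. x a * y b * z c)
       = (\<Sum>(x, y, z)\<in>{(x, y, z). x \<in> X \<and> y \<in> X \<and> z \<in> X
              \<and> op x (op y z) = char_one}. x a * y b * z c)"
proof -
  have G: "group M" by (rule grp)
  have ab: "a \<otimes>\<^bsub>M\<^esub> b \<in> carrier M" "b \<otimes>\<^bsub>M\<^esub> c \<in> carrier M"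
    using a b c G by (simp_all add: group.is_monoid monoid.m_closed)
  let ?f = "\<lambda>(x, y, z). x a * y b * z c"
  have L: "(\<Sum>p\<in>{(x, y, z). x \<in> X \<and> y \<in> X \<and> z \<in> X \<and> op (op x y) z = char_one}. ?f p)
      = (\<Sum>p\<in>X \<times> X. ?f (phiL p))"
    using sum.reindex_bij_betw[OF bijL, of ?f] by simp
  also have "\<dots> = (\<Sum>p\<in>X \<times> X. (\<lambda>(t,u). (i t a * char_mult (i t) (char_inv t) b) *
        (i u (a \<otimes>\<^bsub>M\<^esub> b) * char_mult (i u) (char_inv u) c)) p)"
  proof (rule sum.cong[OF refl])
    fix p assume "p \<in> X \<times> X"
    then obtain t u where p: "p = (t, u)" and tu: "t \<in> X" "u \<in> X" by blast
    show "?f (phiL p) = (\<lambda>(t,u). (i t a * char_mult (i t) (char_inv t) b) *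
        (i u (a \<otimes>\<^bsub>M\<^esub> b) * char_mult (i u) (char_inv u) c)) p"
      unfolding p phiL_def using char_hom[OF i_in[OF tu(2)] a b]
      by (simp add: char_mult_def char_inv_def mult_ac)
  qed
  also have "\<dots> = (\<Sum>t\<in>X. i t a * char_mult (i t) (char_inv t) b) *
        (\<Sum>u\<in>X. i u (a \<otimes>\<^bsub>M\<^esub> b) * char_mult (i u) (char_inv u) c)"
    by (simp add: sum_product sum.cartesian_product)
  also have "\<dots> = (of_nat m * J a b) * (of_nat m * J (a \<otimes>\<^bsub>M\<^esub> b) c)"
    using Ksum[OF a b] Ksum[OF ab(1) c] by simp
  also have "\<dots> = (of_nat m * J a (b \<otimes>\<^bsub>M\<^esub> c)) * (of_nat m * J b c)"
    using core[OF a b c] by (simp add: algebra_simps)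
  also have "\<dots> = (\<Sum>u\<in>X. i u a * char_mult (i u) (char_inv u) (b \<otimes>\<^bsub>M\<^esub> c)) *
        (\<Sum>t\<in>X. i t b * char_mult (i t) (char_inv t) c)"
    using Ksum[OF a ab(2)] Ksum[OF b c] by simp
  also have "\<dots> = (\<Sum>p\<in>X \<times> X. (\<lambda>(t,u). (i u a * char_mult (i u) (char_inv u) (b \<otimes>\<^bsub>M\<^esub> c)) *
        (i t b * char_mult (i t) (char_inv t) c)) p)"
    by (simp add: sum_product sum.cartesian_product sum.swap[of _ X X] mult.commute)
  also have "\<dots> = (\<Sum>p\<in>X \<times> X. ?f (phiR p))"
  proof (rule sum.cong[OF refl])
    fix p assume "p \<in> X \<times> X"
    then obtain t u where p: "p = (t, u)" and tu: "t \<in> X" "u \<in> X" by blast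
    have wX: "char_mult (i u) (char_inv u) \<in> X" by (intro inX tu)
    show "(\<lambda>(t,u). (i u a * char_mult (i u) (char_inv u) (b \<otimes>\<^bsub>M\<^esub> c)) *
        (i t b * char_mult (i t) (char_inv t) c)) p = ?f (phiR p)"
      unfolding p phiR_def using char_hom[OF wX b c]
      by (simp add: char_mult_def char_inv_def mult_ac)
  qed
  also have "\<dots> = (\<Sum>p\<in>{(x, y, z). x \<in> X \<and> y \<in> X \<and> z \<in> X \<and> op x (op y z) = char_one}. ?f p)"
    using sum.reindex_bij_betw[OF bijR, of ?f] by simp
  finally show ?thesis .
qed

end

theorem mainTheorem16:
  fixes M :: "('a, 'b) monoid_scheme"
    and J :: "'a \<Rightarrow> 'a \<Rightarrow> complex"
    and i :: "('a \<Rightarrow> complex) \<Rightarrow> ('a \<Rightarrow> complex)"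
    and m :: nat
  assumes "comm_group M"
    and "finite (carrier M)"
    and "m = card (carrier M)"
    and "jacobi_function M J"
    and "bij_betw i (characters M) (characters M)"
    and "\<forall>x\<in>characters M. i x = char_mult x (i (char_inv x))"
    and "\<forall>a\<in>carrier M. \<forall>b\<in>carrier M.
           J a b = (1 / of_nat m) * (\<Sum>x\<in>characters M. i x a * char_mult (i x) (char_inv x) b)"
    and "a \<in> carrier M" and "b \<in> carrier M" and "c \<in> carrier M"
  shows "(\<Sum>(x, y, z)\<in>{(x, y, z). x \<in> characters M \<and> y \<in> characters M \<and> z \<in> characters M
              \<and> char_oplus i (char_oplus i x y) z = char_one}. x a * y b * z c)
       = (\<Sum>(x, y, z)\<in>{(x, y, z). x \<in> characters M \<and> y \<in> characters M \<and> z \<in> characters M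
              \<and> char_oplus i x (char_oplus i y z) = char_one}. x a * y b * z c)"
proof -
  interpret jac M J i m by (rule jac.intro[OF assms(1-7)])
  show ?thesis by (rule final[OF assms(8-10)])
qed

end
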